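(* In the setting of the context, fix any agent $i\in\mathcal V$. Suppose $e_{2,i}^{\max}>0$ is a constant such that, for all $t\ge0$, $$\|\widehat W_i(t)\|\,\|\sigma(\widehat\Phi_i(\hat x_i(t)))\|+\|K_1\|\,\|z_i(t)\|+\|K_1C_i^\top\|\,\|e_{3,i}(t)\|\le e_{2,i}^{\max}.$$ Such a constant exists because these signals are bounded. Then the event times generated by the event-trigger rule of agent $i$ satisfy, for every $k\in\mathbb Z_{\ge0}$, $$t_{k+1}^i-t_k^i\ge\frac{1}{e_{2,i}^{\max}}\sqrt{\frac{\epsilon}{N\phi_1}}.$$
   Context: Graph: $\mathcal G=(\mathcal V,\mathcal E,\mathcal A)$ is a static, undirected, connected graph on $\mathcal V=\{1,\dots,N\}$. It has a symmetric weighted adjacency matrix $\mathcal A=[a_{ij}]$ with $a_{ii}=0$, $a_{ij}>0$ if $(j,i)\in\mathcal E$ and $a_{ij}=0$ otherwise. The neighbor set is $\mathcal N_i=\{j:(j,i)\in\mathcal E\}$, the Laplacian is $L=\Delta-\mathcal A$, and $\Delta=\mathrm{diag}(\sum_j a_{ij})$. System: $\dot x_0(t)=f(x_0(t))+d(t)$ with $x_0(t)\in\mathbb R^n$, where: - $f:\mathbb R^n\to\mathbb R^n$ is unknown and locally Lipschitz; - $d$ is continuous with $\|d(t)\|\le d_{\max}$ for all $t\ge0$; - $x_0(t)$ remains in a compact set $\mathcal D\subset\mathbb R^n$ for all $t\ge0$. On $\mathcal D$, $f(x)=W_0^\top\sigma(\Phi(x))+\varepsilon(x)$. Here $W_0\in\mathbb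 R^{L\times n}$ is an unknown constant matrix, $\sigma:\mathbb R^p\to\mathbb R^L$ is a vector of bounded continuous activation functions, $\Phi:\mathbb R^n\to\mathbb R^p$ is an (unknown) inner deep network $\Phi=W_\ell^\top\phi_\ell\circ\cdots\circ W_1^\top\phi_1$, and $\varepsilon$ is a bounded reconstruction error. Sensors: agent $i$ continuously measures $y_i(t)=C_ix_0(t)$ with known $C_i\in\mathbb R^{m\times n}$. Set $C=\mathrm{diag}(C_1,\dots,C_N)\in\mathbb R^{mN\times nN}$. Event-triggered sampling: each agent $i$ has an increasing sequence of event times $\{t_k^i\}_{k\ge0}$. The sampled estimate is the zero-order hold $\tilde x_i(t)=\hat x_i(t_k^i)$ for $t\in[t_k^i,t_{k+1}^i)$, and it is available to agent $i$ and all its neighbors. Observer of agent $i$: - $\dot{\hat x}_i=\widehat W_i^\top(t)\sigma(\widehat\Phi_i(\hat x_i))+K_1\big(z_i-C_i^\top e_{3,i}\big)$, - $z_i=\sum_{j\in\mathcal N_i}a_{ij}(\tilde x_j-\tilde x_i)$, - $\hat y_i=C_i\hat x_i$. The estimated inner network $\widehat\Phi_i$ is piecewise constant in time: it is replaced only at a discrete sequence of switching times $\{T_p^i\}$ (offline retraining), and between switches it is a fixed continuous function $\mathbb R^n\to\mathbb R^p$. $K_1\in\mathbb R^{n\times n}$ is a symmetric gain matrix. Errors: - $e_{1,i}=\hat x_i-x_0$, - $e_{2,i}=\tilde x_i-\hat x_i$, - $e_{3,i}=\hat y_i-y_i$. Outer-weight update: let $\omega_i=\mathrm{vec}(\widehat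 W_i)$. Then $\dot\omega_i=\mathrm{proj}(\mu_i,\omega_i)$, where $\mu_i=-\mathrm{vec}\big(\Gamma_i\sigma(\widehat\Phi_i(\hat x_i))e_{3,i}^\top C_i\big)$, $\Gamma_i$ is positive definite, and $\mathrm{proj}$ is a continuous projection operator keeping $\|\widehat W_i(t)\|\le\bar\omega$ for all $t$. Gains: $\kappa>0$, $k_2>1/\kappa$, $\epsilon>0$. Event-trigger rule: $t_{k+1}^i=\inf\{t>t_k^i:\ \phi_1\|e_{2,i}(t)\|^2\ge\phi_2\|z_i(t)\|^2+\epsilon/N\}$, where $\phi_1=\frac{k_2}{2}+\frac{\kappa}{2}\|L\otimes K_1\|^2$ and $\phi_2=\frac{k_2}{4\|L\otimes I_n\|^2}$. *)

theory Defs
  imports "HOL-Analysis.Analysis"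
begin

definition valid_adjacency :: "nat \<Rightarrow> (nat \<Rightarrow> nat \<Rightarrow> real) \<Rightarrow> bool" where
  "valid_adjacency N a \<longleftrightarrow> (\<forall>i j. a i j = a j i) \<and> (\<forall>i. a i i = 0) \<and> (\<forall>i j. a i j \<ge> 0)"

definition graph_connected :: "nat \<Rightarrow> (nat \<Rightarrow> nat \<Rightarrow> real) \<Rightarrow> bool" where
  "graph_connected N a \<longleftrightarrow>
     (\<forall>i\<in>{1..N}. \<forall>j\<in>{1..N}.
        (\<lambda>u v. u \<in> {1..N} \<and> v \<in> {1..N} \<and> a u v > 0)\<^sup>*\<^sup>* i j)"

definition nbrs :: "nat \<Rightarrow> (nat \<Rightarrow> nat \<Rightarrow> real) \<Rightarrow> nat \<Rightarrow> nat set" where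
  "nbrs N a i = {j \<in> {1..N}. a i j > 0}"

definition lap :: "nat \<Rightarrow> (nat \<Rightarrow> nat \<Rightarrow> real) \<Rightarrow> nat \<Rightarrow> nat \<Rightarrow> real" where
  "lap N a i j = (if i = j then (\<Sum>k\<in>{1..N}. a i k) else 0) - a i j"

text \<open>Norm of the Kronecker product M (x) K, where M is N x N (indices 1..N);
  matrix norm = Euclidean norm of the vectorised matrix (Frobenius norm),
  which is also the library's norm on real^'n^'m.\<close>
definition kron_norm :: "nat \<Rightarrow> (nat \<Rightarrow> nat \<Rightarrow> real) \<Rightarrow> real^'n^'k \<Rightarrow> real" where
  "kron_norm N M K = sqrt (\<Sum>i\<in>{1..N}. \<Sum>j\<in>{1..N}. (norm (M i j *\<^sub>R K))\<^sup>2)"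

definition zsig :: "nat \<Rightarrow> (nat \<Rightarrow> nat \<Rightarrow> real) \<Rightarrow> (nat \<Rightarrow> real \<Rightarrow> real^'n) \<Rightarrow> nat \<Rightarrow> real \<Rightarrow> real^'n" where
  "zsig N a xt i t = (\<Sum>j\<in>nbrs N a i. a i j *\<^sub>R (xt j t - xt i t))"

definition e3sig :: "(nat \<Rightarrow> real^'n^'m) \<Rightarrow> (real \<Rightarrow> real^'n) \<Rightarrow> (nat \<Rightarrow> real \<Rightarrow> real^'n) \<Rightarrow> nat \<Rightarrow> real \<Rightarrow> real^'m" where
  "e3sig C x0 xh i t = C i *v xh i t - C i *v x0 t"

definition outer :: "real^'a \<Rightarrow> real^'b \<Rightarrow> real^'b^'a" where
  "outer u v = (\<chi> r s. u $ r * v $ s)"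

text \<open>Event-trigger set after the event time s of agent j: the trigger quantities are
  evaluated with the currently held sample x~_j = xhat_j(s), i.e.
  e_{2,j}(t) = xhat_j(s) - xhat_j(t) and z_j(t) = sum a_jl (x~_l(t) - xhat_j(s)).\<close>
definition trigger_set ::
  "nat \<Rightarrow> (nat \<Rightarrow> nat \<Rightarrow> real) \<Rightarrow> (nat \<Rightarrow> real \<Rightarrow> real^'n) \<Rightarrow> (nat \<Rightarrow> real \<Rightarrow> real^'n)
    \<Rightarrow> real \<Rightarrow> real \<Rightarrow> real \<Rightarrow> nat \<Rightarrow> real \<Rightarrow> real set" where
  "trigger_set N a xh xt \<phi>1 \<phi>2 \<epsilon> j s =
     {t. t > s \<and>
         \<phi>1 * (norm (xh j s - xh j t))\<^sup>2
           \<ge> \<phi>2 * (norm (\<Sum>l\<in>nbrs N a j. a j l *\<^sub>R (xt l t - xh j s)))\<^sup>2 + \<epsilon> / real N}"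

end

theory Submission
  imports Defs
begin

lemma tri3: fixes a b c :: "'a::real_normed_vector"
  shows "norm (a + (b - c)) \<le> norm a + norm b + norm c"
  using norm_triangle_ineq[of a "b - c"] norm_triangle_ineq4[of b c] by linarith

lemma norm_sq_mat: fixes A :: "real^'n^'m"
  shows "(norm A)^2 = (\<Sum>i\<in>UNIV. \<Sum>j\<in>UNIV. (A$i$j)^2)"
  by (simp add: norm_vec_def L2_set_def sum_nonneg)

lemma norm_transpose_eq: fixes A :: "real^'n^'m"
  shows "norm (transpose A) = norm A"
proof -
  have "(norm (transpose A))^2 = (\<Sum>i\<in>UNIV. \<Sum>j\<in>UNIV. (A$j$i)^2)"
    by (simp add: norm_sq_mat transpose_def)
  also have "\<dots> = (\<Sum>j\<in>UNIV. \<Sum>i\<in>UNIV. (A$j$i)^2)" by (rule sum.swap)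
  also have "\<dots> = (norm A)^2" by (simp add: norm_sq_mat)
  finally have "(norm (transpose A))^2 = (norm A)^2" .
  then show ?thesis by (metis norm_ge_zero power2_eq_iff_nonneg)
qed

lemma norm_mv_le: fixes A :: "real^'n^'m"
  shows "norm (A *v x) \<le> norm A * norm x"
proof -
  have row: "(A *v x) $ i = A $ i \<bullet> x" for i
    by (simp add: matrix_vector_mult_def inner_vec_def)
  have "(norm (A *v x))^2 = (\<Sum>i\<in>UNIV. ((A *v x)$i)^2)"
    by (simp add: norm_vec_def L2_set_def sum_nonneg)
  also have "\<dots> \<le> (\<Sum>i\<in>UNIV. (norm (A$i))^2 * (norm x)^2)"
  proof (rule sum_mono)
    fix i
    have "\<bar>A $ i \<bullet> x\<bar> \<le> norm (A$i) * norm x" by (rule Cauchy_Schwarz_ineq2)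
    then have "\<bar>A $ i \<bullet> x\<bar>^2 \<le> (norm (A$i) * norm x)^2" by (rule power_mono) simp
    then show "((A *v x)$i)^2 \<le> (norm (A$i))^2 * (norm x)^2" by (simp add: row power_mult_distrib)
  qed
  also have "\<dots> = (norm A)^2 * (norm x)^2"
    by (simp add: norm_vec_def L2_set_def sum_distrib_right sum_nonneg)
  finally have "(norm (A *v x))^2 \<le> (norm A * norm x)^2" by (simp add: power_mult_distrib)
  then show ?thesis by (rule power2_le_imp_le) simp
qed

lemma mvt_countable_c:
  fixes f :: "real \<Rightarrow> 'a::real_normed_vector"
  assumes ab: "a \<le> b" and E: "countable E" and cont: "continuous_on {a..b} f"
    and der: "\<And>x. x \<in> {a<..<b} - E \<Longrightarrow> (f has_vector_derivative f' x) (at x)"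
    and bd: "\<And>x. x \<in> {a<..<b} - E \<Longrightarrow> norm (f' x) \<le> M"
    and cM: "c > M"
  shows "norm (f b - f a) \<le> c * (b - a)"
proof (rule ccontr)
  assume neg: "\<not> norm (f b - f a) \<le> c * (b - a)"
  define g where "g t = norm (f t - f a) - c * (t - a)" for t
  have gb: "g b > 0" using neg by (simp add: g_def)
  have ga: "g a = 0" by (simp add: g_def)
  have gcont: "continuous_on {a..b} g" unfolding g_def
    by (intro continuous_intros cont)
  define S where "S v = {a..b} \<inter> g -` {..v}" for v
  define s where "s v = Sup (S v)" for v
  have key: "a \<le> s v \<and> s v < b \<and> g (s v) = v \<and> (\<forall>t. s v < t \<and> t \<le> b \<longrightarrow> g t > v)"
    if v: "v \<in> {0<..<g b}" for v
  proof -
    have ne: "S v \<noteq> {}" using ab ga v by (auto simp: S_def)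
    have bdd: "bdd_above (S v)" by (auto simp: S_def bdd_above_def)
    have cl: "closed (S v)" unfolding S_def
      by (rule continuous_closed_preimage[OF gcont]) auto
    have sin: "s v \<in> S v" unfolding s_def by (rule closed_contains_Sup[OF ne bdd cl])
    have aS: "a \<in> S v" using ab ga v by (auto simp: S_def)
    have "a \<le> s v" unfolding s_def by (rule cSup_upper[OF aS bdd])
    moreover have gs: "g (s v) \<le> v" "s v \<le> b" using sin by (auto simp: S_def)
    moreover have sb: "s v \<noteq> b" using gs v by auto
    moreover have after: "\<forall>t. s v < t \<and> t \<le> b \<longrightarrow> g t > v"
    proof (intro allI impI)
      fix t assume t: "s v < t \<and> t \<le> b"
      show "g t > v"
      proof (rule ccontr)
        assume "\<not> g t > v"
        then have "t \<in> S v" using t \<open>a \<le> s v\<close> by (auto simp: S_def)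
        then have "t \<le> s v" unfolding s_def by (rule cSup_upper[OF _ bdd])
        then show False using t by simp
      qed
    qed
    moreover have "g (s v) = v"
    proof -
      have "continuous_on {s v..b} g"
        using gcont by (rule continuous_on_subset) (use \<open>a \<le> s v\<close> in auto)
      then obtain x where x: "s v \<le> x" "x \<le> b" "g x = v"
        using IVT'[of g "s v" v b] gs v by auto
      then have "x = s v" using after by force
      then show ?thesis using x by simp
    qed
    ultimately show ?thesis by auto
  qed
  have inj: "inj_on s {0<..<g b}"
    by (rule inj_onI) (metis key)
  have "\<exists>v\<in>{0<..<g b}. s v \<notin> E \<union> {a}"
  proof (rule ccontr)
    assume "\<not> ?thesis"
    then have "s ` {0<..<g b} \<subseteq> E \<union> {a}" by auto
    moreover have "countable (E \<union> {a})" using E by simp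
    ultimately have "countable (s ` {0<..<g b})" by (rule countable_subset)
    then have "countable {0<..<g b}" by (rule countable_image_inj_on[OF _ inj])
    moreover have "uncountable {0<..<g b}" using gb by (simp only: uncountable_open_interval)
    ultimately show False by simp
  qed
  then obtain v where v: "v \<in> {0<..<g b}" and sE: "s v \<notin> E \<union> {a}" by blast
  define x where "x = s v"
  have x: "a < x" "x < b" "g x = v" and after: "\<And>t. x < t \<Longrightarrow> t \<le> b \<Longrightarrow> g t > v"
    using key[OF v] sE unfolding x_def by auto
  have xin: "x \<in> {a<..<b} - E" using x sE x_def by auto
  have "(f has_derivative (\<lambda>h. h *\<^sub>R f' x)) (at x)"
    using der[OF xin] by (simp add: has_vector_derivative_def)
  then obtain d where d: "d > 0"
    and dd: "\<And>y. norm (y - x) < d \<Longrightarrow> norm (f y - f x - (y - x) *\<^sub>R f' x) \<le> ((c - M)/2) * norm (y - x)"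
    unfolding has_derivative_at_alt using cM by (metis half_gt_zero diff_gt_0_iff_gt)
  define y where "y = x + min (d/2) (b - x)"
  have y: "x < y" "y \<le> b" "norm (y - x) < d" using d x by (auto simp: y_def)
  have "norm (f y - f x) \<le> norm ((y - x) *\<^sub>R f' x) + ((c - M)/2) * norm (y - x)"
    using dd[OF y(3)] norm_triangle_ineq2[of "f y - f x" "(y - x) *\<^sub>R f' x"] by simp
  also have "\<dots> \<le> (y - x) * M + ((c - M)/2) * (y - x)"
    using y bd[OF xin] by (simp add: mult_left_mono)
  finally have fy: "norm (f y - f x) \<le> (M + (c - M)/2) * (y - x)" by (simp add: algebra_simps)
  have "norm (f y - f a) \<le> norm (f x - f a) + norm (f y - f x)"
    using norm_triangle_ineq[of "f x - f a" "f y - f x"] by simp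
  then have "g y \<le> g x + (M + (c - M)/2) * (y - x) - c * (y - x)"
    using fy unfolding g_def by (simp add: algebra_simps)
  also have "\<dots> < g x"
  proof -
    have "(M + (c - M)/2) * (y - x) < c * (y - x)"
      by (rule mult_strict_right_mono) (use y cM in \<open>auto simp: field_simps\<close>)
    then show ?thesis by linarith
  qed
  finally have "g y < v" using x by simp
  then show False using after[OF y(1) y(2)] by simp
qed

lemma mvt_countable:
  fixes f :: "real \<Rightarrow> 'a::real_normed_vector"
  assumes ab: "a \<le> b" and E: "countable E" and cont: "continuous_on {a..b} f"
    and der: "\<And>x. x \<in> {a<..<b} - E \<Longrightarrow> (f has_vector_derivative f' x) (at x)"
    and bd: "\<And>x. x \<in> {a<..<b} - E \<Longrightarrow> norm (f' x) \<le> M"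
  shows "norm (f b - f a) \<le> M * (b - a)"
proof (rule field_le_epsilon)
  fix e :: real assume e: "e > 0"
  show "norm (f b - f a) \<le> M * (b - a) + e"
  proof (cases "a = b")
    case True then show ?thesis using e by simp
  next
    case False
    then have "b - a > 0" using ab by simp
    have "norm (f b - f a) \<le> (M + e/(b-a)) * (b - a)"
      by (rule mvt_countable_c[OF ab E cont der bd]) (use e \<open>b - a > 0\<close> in auto)
    moreover have "(M + e/(b-a)) * (b - a) = M * (b - a) + e" using \<open>b - a > 0\<close> by (simp add: field_simps)
    ultimately show ?thesis by simp
  qed
qed


theorem theorem2:
  fixes N :: nat and a :: "nat \<Rightarrow> nat \<Rightarrow> real"
    and x0 :: "real \<Rightarrow> real^'n" and f :: "real^'n \<Rightarrow> real^'n" and d :: "real \<Rightarrow> real^'n"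
    and dmax :: real and D :: "(real^'n) set"
    and W0 :: "real^'n^'L" and \<sigma> :: "real^'p \<Rightarrow> real^'L" and \<Phi> :: "real^'n \<Rightarrow> real^'p"
    and eps :: "real^'n \<Rightarrow> real^'n"
    and C :: "nat \<Rightarrow> real^'n^'m"
    and xh xt :: "nat \<Rightarrow> real \<Rightarrow> real^'n"
    and What :: "nat \<Rightarrow> real \<Rightarrow> real^'n^'L"
    and Phih :: "nat \<Rightarrow> real \<Rightarrow> real^'n \<Rightarrow> real^'p"
    and T :: "nat \<Rightarrow> nat \<Rightarrow> real"
    and tk :: "nat \<Rightarrow> nat \<Rightarrow> real"
    and K1 :: "real^'n^'n"
    and \<Gamma> :: "nat \<Rightarrow> real^'L^'L"
    and proj :: "real^'n^'L \<Rightarrow> real^'n^'L \<Rightarrow> real^'n^'L"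
    and \<omega>bar \<kappa> k2 \<epsilon> \<phi>1 \<phi>2 e2max :: real
    and i :: nat
  assumes adj: "valid_adjacency N a" and conn: "graph_connected N a"
    and x0_ode: "\<forall>t\<ge>0. (x0 has_vector_derivative (f (x0 t) + d t)) (at t within {0..})"
    and f_lip: "local_lipschitz UNIV UNIV (\<lambda>_::real. f)"
    and d_cont: "continuous_on {0..} d" and d_bound: "\<forall>t\<ge>0. norm (d t) \<le> dmax"
    and D_compact: "compact D" and x0_in_D: "\<forall>t\<ge>0. x0 t \<in> D"
    and f_nn: "\<forall>x\<in>D. f x = transpose W0 *v \<sigma> (\<Phi> x) + eps x"
    and \<sigma>_cont: "continuous_on UNIV \<sigma>" and \<sigma>_bdd: "bounded (range \<sigma>)"
    and eps_bdd: "bounded (eps ` D)"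
    and K1_sym: "transpose K1 = K1"
    and \<kappa>_pos: "\<kappa> > 0" and k2_gt: "k2 > 1 / \<kappa>" and \<epsilon>_pos: "\<epsilon> > 0"
    and \<phi>1_def: "\<phi>1 = k2 / 2 + \<kappa> / 2 * (kron_norm N (lap N a) K1)\<^sup>2"
    and \<phi>2_def: "\<phi>2 = k2 / (4 * (kron_norm N (lap N a) (mat 1 :: real^'n^'n))\<^sup>2)"
    and \<Gamma>_pd: "\<forall>j\<in>{1..N}. transpose (\<Gamma> j) = \<Gamma> j \<and> (\<forall>v. v \<noteq> 0 \<longrightarrow> v \<bullet> (\<Gamma> j *v v) > 0)"
    and proj_cont: "continuous_on UNIV (\<lambda>(\<mu>, \<omega>). proj \<mu> \<omega>)"
    and events: "\<forall>j\<in>{1..N}. tk j 0 = 0 \<and> strict_mono (tk j)"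
    and zoh: "\<forall>j\<in>{1..N}. \<forall>k. \<forall>t\<in>{tk j k..<tk j (Suc k)}. xt j t = xh j (tk j k)"
    and switching: "\<forall>j\<in>{1..N}. T j 0 = 0 \<and> strict_mono (T j)
        \<and> (\<forall>p. \<forall>t\<in>{T j p..<T j (Suc p)}. Phih j t = Phih j (T j p))
        \<and> (\<forall>t. continuous_on UNIV (Phih j t))"
    and observer: "\<forall>j\<in>{1..N}. continuous_on {0..} (xh j) \<and>
        (\<forall>t>0. t \<notin> range (tk j) \<union> (\<Union>l\<in>nbrs N a j. range (tk l)) \<union> range (T j) \<longrightarrow>
          (xh j has_vector_derivative
             (transpose (What j t) *v \<sigma> (Phih j t (xh j t))
              + K1 *v (zsig N a xt j t - transpose (C j) *v e3sig C x0 xh j t))) (at t))"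
    and weights: "\<forall>j\<in>{1..N}. continuous_on {0..} (What j) \<and> (\<forall>t\<ge>0. norm (What j t) \<le> \<omega>bar) \<and>
        (\<forall>t>0. t \<notin> range (T j) \<longrightarrow>
          (What j has_vector_derivative
             proj (- (\<Gamma> j ** outer (\<sigma> (Phih j t (xh j t))) (transpose (C j) *v e3sig C x0 xh j t)))
                  (What j t)) (at t))"
    and trigger: "\<forall>j\<in>{1..N}. \<forall>k.
        trigger_set N a xh xt \<phi>1 \<phi>2 \<epsilon> j (tk j k) \<noteq> {} \<and>
        tk j (Suc k) = Inf (trigger_set N a xh xt \<phi>1 \<phi>2 \<epsilon> j (tk j k))"
    and i_in: "i \<in> {1..N}"
    and e2max_pos: "e2max > 0"
    and e2max_bound: "\<forall>t\<ge>0. norm (What i t) * norm (\<sigma> (Phih i t (xh i t)))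
        + norm K1 * norm (zsig N a xt i t)
        + norm (K1 ** transpose (C i)) * norm (e3sig C x0 xh i t) \<le> e2max"
  shows "\<forall>k. tk i (Suc k) - tk i k \<ge> (1 / e2max) * sqrt (\<epsilon> / (real N * \<phi>1))"
proof (intro allI)
  fix k
  have ev: "tk i 0 = 0" "strict_mono (tk i)" using events i_in by auto
  define s where "s = tk i k"
  have s0: "s \<ge> 0" using ev strict_mono_less_eq[OF ev(2), of 0 k] by (simp add: s_def)
  have N1: "real N \<ge> 1" using i_in by simp
  have k2pos: "k2 > 0" using k2_gt \<kappa>_pos
    by (meson less_trans zero_less_divide_1_iff)
  have \<phi>1pos: "\<phi>1 > 0" using \<phi>1_def k2pos \<kappa>_pos
  proof -
    have "0 \<le> \<kappa> / 2 * (kron_norm N (lap N a) K1)\<^sup>2" using \<kappa>_pos by simp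
    then show ?thesis using \<phi>1_def k2pos by linarith
  qed
  have \<phi>2nn: "\<phi>2 \<ge> 0" using \<phi>2_def k2pos by simp
  define TS where "TS = trigger_set N a xh xt \<phi>1 \<phi>2 \<epsilon> i s"
  define \<delta> where "\<delta> = (1 / e2max) * sqrt (\<epsilon> / (real N * \<phi>1))"
  have lower: "s + \<delta> \<le> t" if tT: "t \<in> TS" for t
  proof -
    have ts: "t > s" and trig: "\<phi>1 * (norm (xh i s - xh i t))\<^sup>2
           \<ge> \<phi>2 * (norm (\<Sum>l\<in>nbrs N a i. a i l *\<^sub>R (xt l t - xh i s)))\<^sup>2 + \<epsilon> / real N"
      using tT by (auto simp: TS_def trigger_set_def)
    define E where "E = range (tk i) \<union> (\<Union>l\<in>nbrs N a i. range (tk l)) \<union> range (T i)"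
    have fin: "finite (nbrs N a i)" unfolding nbrs_def by simp
    have cE: "countable E" unfolding E_def using fin by (auto intro!: countable_UN countable_finite)
    have obs: "continuous_on {0..} (xh i)" and
      obsd: "\<And>x. x > 0 \<Longrightarrow> x \<notin> E \<Longrightarrow> (xh i has_vector_derivative
             (transpose (What i x) *v \<sigma> (Phih i x (xh i x))
              + K1 *v (zsig N a xt i x - transpose (C i) *v e3sig C x0 xh i x))) (at x)"
      using observer i_in unfolding E_def by auto
    have "norm (xh i t - xh i s) \<le> e2max * (t - s)"
    proof (rule mvt_countable[OF _ cE])
      show "s \<le> t" using ts by simp
      show "continuous_on {s..t} (xh i)" using obs by (rule continuous_on_subset) (use s0 in auto)
      fix x assume x: "x \<in> {s<..<t} - E"
      then show "(xh i has_vector_derivative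
             (transpose (What i x) *v \<sigma> (Phih i x (xh i x))
              + K1 *v (zsig N a xt i x - transpose (C i) *v e3sig C x0 xh i x))) (at x)"
        using obsd s0 by auto
      have x0: "x \<ge> 0" using x s0 by auto
      have eq: "K1 *v (zsig N a xt i x - transpose (C i) *v e3sig C x0 xh i x)
          = K1 *v zsig N a xt i x - (K1 ** transpose (C i)) *v e3sig C x0 xh i x"
        unfolding matrix_vector_mult_diff_distrib matrix_vector_mul_assoc ..
      have "norm (transpose (What i x) *v \<sigma> (Phih i x (xh i x))
              + K1 *v (zsig N a xt i x - transpose (C i) *v e3sig C x0 xh i x))
          \<le> norm (transpose (What i x) *v \<sigma> (Phih i x (xh i x)))
             + norm (K1 *v zsig N a xt i x) + norm ((K1 ** transpose (C i)) *v e3sig C x0 xh i x)"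
        unfolding eq by (rule tri3)
      also have "\<dots> \<le> norm (What i x) * norm (\<sigma> (Phih i x (xh i x)))
        + norm K1 * norm (zsig N a xt i x)
        + norm (K1 ** transpose (C i)) * norm (e3sig C x0 xh i x)"
        using norm_mv_le[of "transpose (What i x)"] norm_mv_le[of K1] norm_mv_le[of "K1 ** transpose (C i)"]
        by (simp add: norm_transpose_eq add_mono)
      also have "\<dots> \<le> e2max" using e2max_bound x0 by auto
      finally show "norm (transpose (What i x) *v \<sigma> (Phih i x (xh i x))
              + K1 *v (zsig N a xt i x - transpose (C i) *v e3sig C x0 xh i x)) \<le> e2max" .
    qed
    then have nb: "norm (xh i s - xh i t) \<le> e2max * (t - s)" by (simp add: norm_minus_commute)
    have "\<epsilon> / real N \<le> \<phi>1 * (norm (xh i s - xh i t))\<^sup>2"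
    proof -
      have "0 \<le> \<phi>2 * (norm (\<Sum>l\<in>nbrs N a i. a i l *\<^sub>R (xt l t - xh i s)))\<^sup>2"
        using \<phi>2nn by simp
      then show ?thesis using trig by linarith
    qed
    also have "\<dots> \<le> \<phi>1 * (e2max * (t - s))\<^sup>2"
      using nb \<phi>1pos by (simp add: power_mono mult_left_mono)
    finally have h: "\<epsilon> / real N \<le> \<phi>1 * (e2max * (t - s))\<^sup>2" .
    have "\<epsilon> / (real N * \<phi>1) \<le> (e2max * (t - s))\<^sup>2"
    proof -
      have "\<epsilon> / (real N * \<phi>1) = (\<epsilon> / real N) / \<phi>1" by simp
      also have "\<dots> \<le> (e2max * (t - s))\<^sup>2"
        using h \<phi>1pos by (subst pos_divide_le_eq) (auto simp: mult.commute)
      finally show ?thesis .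
    qed
    then have "sqrt (\<epsilon> / (real N * \<phi>1)) \<le> e2max * (t - s)"
      using e2max_pos ts by (intro real_le_lsqrt) auto
    then have "(1/e2max) * sqrt (\<epsilon> / (real N * \<phi>1)) \<le> t - s"
      using e2max_pos by (simp add: field_simps)
    then show ?thesis unfolding \<delta>_def by simp
  qed
  have ne: "TS \<noteq> {}" and nx: "tk i (Suc k) = Inf TS"
    using trigger i_in unfolding TS_def s_def by auto
  have "s + \<delta> \<le> Inf TS" by (rule cInf_greatest[OF ne lower])
  then show "tk i (Suc k) - tk i k \<ge> (1 / e2max) * sqrt (\<epsilon> / (real N * \<phi>1))"
    using nx unfolding \<delta>_def s_def by simp
qed

end
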